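(* Let $\beta\in(0,1)$, $z>0$, $c>0$, $\delta\in(0,1)$, and let $N$ and $\Delta$ be positive integers. Let $F$ be a continuous cumulative distribution function with support $[\underline{w},\overline{w}]$, $\underline{w}<\overline{w}$, and mean $\mu_w$. Assume $\underline{w}<(1-\beta)z+\beta\mu_w$ and $z+c<\overline{w}$. For $x\in[\underline{w},\overline{w}]$ put $\Upsilon(x)=\int_{\underline{w}}^{x}x\,dF(w)+\int_{x}^{\overline{w}}w\,dF(w)$. Let $w_R(0)$ be the unique solution in $[\underline{w},\overline{w}]$ of $x=z(1-\beta)+\beta\Upsilon(x)$, and define $w_R(n)=(z+c)(1-\beta)+\beta\Upsilon(w_R(n-1))$ for all integers $n\ge1$. Then the equation $$x=z(1-\beta)+\beta\delta\,\Upsilon(w_R(\Delta))+\beta(1-\delta)\,\Upsilon(x)$$ has exactly one solution $x\in[\underline{w},\overline{w}]$; call it $w_R^\delta(0)$. Defining recursively, for $n=1,\dots,N$, $$w_R^\delta(n)=(z+c)(1-\beta)+\beta\delta\,\Upsilon(w_R(n-1+\Delta))+\beta(1-\delta)\,\Upsilon(w_R^\delta(n-1)),$$ we have $$\overline{w}>w_R^\delta(N)>\cdots>w_R^\delta(n+1)>w_R^\delta(n)>\cdots>w_R^\delta(0)>\underline{w}.$$ The analogous existence, uniqueness and strict monotonicity (with $w_R^\delta(0)>\underline{w}$ and all values finite) hold when the support of $F$ is $[\underline{w},\infty)$ with finite mean, with $\overline{w}$ replaced by $\infty$ in the definition of $\Upsilon$.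
   Context: Interpretation (the paper's model): a risk-neutral, infinitely lived worker maximizes $\mathrm{E}_0\sum_{t\ge0}\beta^t x_t$; while unemployed they draw one i.i.d. wage offer per period from $F$, and an accepted job paying $w$ is kept forever (value $w/(1-\beta)$). With $n\ge1$ remaining periods of unemployment-insurance benefits, flow income while unemployed is $z+c$, otherwise $z$. Before any extension has occurred, between offers benefits are extended by $\Delta$ periods with probability $\delta$ (so after a rejection in state $n$ the next state is $n-1+\Delta$ with probability $\delta$, else $n-1$; at $n=0$ it is $\Delta$ with probability $\delta$, else $0$); after an extension no further extension is possible, and the worker faces the standard problem whose reservation wages are $w_R(n)$. The numbers $w_R^\delta(n)$ are the reservation wages before any extension: the optimal policy in state $n$ is to accept any offer $w\ge w_R^\delta(n)$ if benefits have not yet been extended and any offer $w\ge w_R(n)$ if they have. *)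

theory Defs
  imports "HOL-Analysis.Analysis"
begin

text \<open>The upper end of the support is an extended real wu
  (wu = PInfty for the unbounded case).\<close>

definition supp_int :: "real \<Rightarrow> ereal \<Rightarrow> real set" where
  "supp_int wl wu = {x. wl \<le> x \<and> ereal x \<le> wu}"

definition Ups :: "(real \<Rightarrow> real) \<Rightarrow> real \<Rightarrow> ereal \<Rightarrow> real \<Rightarrow> real" where
  "Ups F wl wu x =
     (LINT w:{wl..x}|interval_measure F. x) +
     (LINT w:{w. x \<le> w \<and> ereal w \<le> wu}|interval_measure F. w)"

fun wR :: "real \<Rightarrow> real \<Rightarrow> real \<Rightarrow> (real \<Rightarrow> real) \<Rightarrow> real \<Rightarrow> ereal \<Rightarrow> nat \<Rightarrow> real" where
  "wR \<beta> z c F wl wu 0 =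
     (THE x. x \<in> supp_int wl wu \<and> x = z * (1 - \<beta>) + \<beta> * Ups F wl wu x)"
| "wR \<beta> z c F wl wu (Suc n) = (z + c) * (1 - \<beta>) + \<beta> * Ups F wl wu (wR \<beta> z c F wl wu n)"

fun wRd :: "real \<Rightarrow> real \<Rightarrow> real \<Rightarrow> real \<Rightarrow> nat \<Rightarrow> (real \<Rightarrow> real) \<Rightarrow> real \<Rightarrow> ereal \<Rightarrow> nat \<Rightarrow> real" where
  "wRd \<beta> z c \<delta> \<Delta> F wl wu 0 =
     (THE x. x \<in> supp_int wl wu \<and>
        x = z * (1 - \<beta>) + \<beta> * \<delta> * Ups F wl wu (wR \<beta> z c F wl wu \<Delta>)
            + \<beta> * (1 - \<delta>) * Ups F wl wu x)"
| "wRd \<beta> z c \<delta> \<Delta> F wl wu (Suc n) =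
     (z + c) * (1 - \<beta>) + \<beta> * \<delta> * Ups F wl wu (wR \<beta> z c F wl wu (n + \<Delta>))
     + \<beta> * (1 - \<delta>) * Ups F wl wu (wRd \<beta> z c \<delta> \<Delta> F wl wu n)"

end

theory Submission
  imports Defs "HOL-Probability.Distribution_Functions"
begin

definition EM :: "(real \<Rightarrow> real) \<Rightarrow> real \<Rightarrow> real" where
  "EM F x = (\<integral>w. max x w \<partial>interval_measure F)"

locale dctx =
  fixes F :: "real \<Rightarrow> real" and wl :: real and wu :: ereal
  assumes F_mono: "mono F"
    and F_cont: "continuous_on UNIV F"
    and F_below: "\<And>x. x \<le> wl \<Longrightarrow> F x = 0"
    and F_above: "\<And>x. wu \<le> ereal x \<Longrightarrow> F x = 1"
    and F_top: "(F \<longlongrightarrow> 1) at_top"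
    and F_supp: "strict_mono_on (supp_int wl wu) F"
    and wl_wu: "ereal wl < wu"
    and mean_fin: "wu = PInfty \<Longrightarrow> integrable (interval_measure F) (\<lambda>w. w)"
begin

lemma rc: "continuous (at_right a) F"
  using F_cont by (simp add: continuous_on_eq_continuous_at continuous_at_imp_continuous_at_within)

lemma Fbot: "(F \<longlongrightarrow> 0) at_bot"
proof -
  have "eventually (\<lambda>x. F x = 0) at_bot"
    unfolding eventually_at_bot_linorder using F_below by blast
  then show ?thesis by (simp add: tendsto_eventually)
qed

lemma RD: "real_distribution (interval_measure F)"
  by (rule real_distribution_interval_measure) (use F_mono rc Fbot F_top in \<open>auto simp: mono_def\<close>)

lemma Iic: "measure (interval_measure F) {..x} = F x"
  by (rule measure_interval_measure_Iic) (use F_mono rc Fbot in \<open>auto simp: mono_def\<close>)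

lemma atom: "measure (interval_measure F) {x} = 0"
proof -
  interpret real_distribution "interval_measure F" by (rule RD)
  have "cdf (interval_measure F) = F" using Iic by (simp add: cdf_def fun_eq_iff)
  moreover have "isCont F x" using F_cont by (simp add: continuous_on_eq_continuous_at)
  ultimately show ?thesis using isCont_cdf by metis
qed

lemma AE_wl: "AE w in interval_measure F. wl < w"
proof -
  interpret real_distribution "interval_measure F" by (rule RD)
  have "measure (interval_measure F) {..wl} = 0" using Iic F_below by simp
  then have "{..wl} \<in> null_sets (interval_measure F)"
    by (intro null_setsI) (auto simp: emeasure_eq_measure)
  then show ?thesis
    by (rule AE_I') auto
qed

lemma AE_wu: "AE w in interval_measure F. ereal w \<le> wu"
proof (cases wu)
  case (real u)
  interpret real_distribution "interval_measure F" by (rule RD)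
  have "measure (interval_measure F) {u<..} = 1 - F u"
  proof -
    have "measure (interval_measure F) {u<..} = measure (interval_measure F) (UNIV - {..u})"
      by (rule arg_cong[where f="measure _"]) auto
    also have "\<dots> = 1 - F u" using prob_compl[of "{..u}"] Iic by simp
    finally show ?thesis .
  qed
  also have "\<dots> = 0" using F_above[of u] real by simp
  finally have "{u<..} \<in> null_sets (interval_measure F)"
    by (intro null_setsI) (auto simp: emeasure_eq_measure)
  then show ?thesis
    by (rule AE_I') (auto simp: real)
qed (use wl_wu in auto)

lemma AE_ne: "AE w in interval_measure F. w \<noteq> x"
proof -
  interpret real_distribution "interval_measure F" by (rule RD)
  have "{x} \<in> null_sets (interval_measure F)" using atom
    by (intro null_setsI) (auto simp: emeasure_eq_measure)
  then show ?thesis by (rule AE_I') auto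
qed

lemma int_id: "integrable (interval_measure F) (\<lambda>w. w)"
proof (cases wu)
  case (real u)
  interpret real_distribution "interval_measure F" by (rule RD)
  show ?thesis
  proof (rule integrable_const_bound[where B="\<bar>wl\<bar> + \<bar>u\<bar>"])
    show "AE w in interval_measure F. norm w \<le> \<bar>wl\<bar> + \<bar>u\<bar>"
      using AE_wl AE_wu by eventually_elim (auto simp: real)
  qed simp
next
  case PInf then show ?thesis using mean_fin by simp
qed (use wl_wu in auto)

lemma Ups_EM: "Ups F wl wu x = EM F x"
proof -
  interpret real_distribution "interval_measure F" by (rule RD)
  let ?M = "interval_measure F"
  let ?S = "{w. x \<le> w \<and> ereal w \<le> wu}"
  have Ss: "?S \<in> sets ?M" by simp
  have i1: "integrable ?M (\<lambda>w. indicator {wl..x} w *\<^sub>R x)"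
    by (rule integrable_mult_indicator) auto
  have i2: "integrable ?M (\<lambda>w. indicator ?S w *\<^sub>R w)"
    by (rule integrable_mult_indicator[OF Ss int_id])
  have "Ups F wl wu x = (\<integral>w. indicator {wl..x} w *\<^sub>R x + indicator ?S w *\<^sub>R w \<partial>?M)"
    unfolding Ups_def set_lebesgue_integral_def using i1 i2 by simp
  also have "\<dots> = EM F x"
    unfolding EM_def
  proof (rule integral_cong_AE)
    show "AE w in ?M. indicator {wl..x} w *\<^sub>R x + indicator ?S w *\<^sub>R w = max x w"
      using AE_wl AE_wu AE_ne[of x] by eventually_elim (auto simp: indicator_def)
  qed auto
  finally show ?thesis .
qed

lemma PU: "measure (interval_measure F) UNIV = 1"
proof -
  interpret real_distribution "interval_measure F" by (rule RD)
  show ?thesis using prob_space by simp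
qed

lemma int_max: "integrable (interval_measure F) (\<lambda>w. max x w)"
proof -
  interpret real_distribution "interval_measure F" by (rule RD)
  show ?thesis by (intro integrable_max int_id) auto
qed

lemma EM_mono: "x \<le> y \<Longrightarrow> EM F x \<le> EM F y"
  unfolding EM_def by (intro integral_mono int_max) auto

lemma EM_lip: "x \<le> y \<Longrightarrow> EM F y \<le> EM F x + (y - x)"
proof -
  interpret real_distribution "interval_measure F" by (rule RD)
  assume xy: "x \<le> y"
  have "EM F y \<le> (\<integral>w. max x w + (y - x) \<partial>interval_measure F)"
    unfolding EM_def apply (intro integral_mono int_max Bochner_Integration.integrable_add)
    using xy by (auto simp: max_def)
  also have "\<dots> = EM F x + (y - x)"
    unfolding EM_def using int_max[of x] by (simp add: PU)
  finally show ?thesis .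
qed

lemma EM_ge_mean: "(\<integral>w. w \<partial>interval_measure F) \<le> EM F x"
  unfolding EM_def by (intro integral_mono int_max int_id) auto

lemma EM_ge: "x \<le> EM F x"
proof -
  interpret real_distribution "interval_measure F" by (rule RD)
  have "(\<integral>w. x \<partial>interval_measure F) \<le> EM F x"
    unfolding EM_def by (intro integral_mono int_max) auto
  then show ?thesis by (simp add: PU)
qed

lemma EM_wl: "EM F wl = (\<integral>w. w \<partial>interval_measure F)"
  unfolding EM_def
  by (rule integral_cong_AE) (use AE_wl in \<open>auto elim!: eventually_mono\<close>)

lemma EM_minus: "wl \<le> x \<Longrightarrow> EM F x - x \<le> (\<integral>w. w \<partial>interval_measure F) - wl"
proof -
  interpret real_distribution "interval_measure F" by (rule RD)
  assume h: "wl \<le> x"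
  have "EM F x \<le> (\<integral>w. max wl w + (x - wl) \<partial>interval_measure F)"
    unfolding EM_def apply (intro integral_mono int_max Bochner_Integration.integrable_add)
    using h by (auto simp: max_def)
  also have "\<dots> = EM F wl + (x - wl)"
    unfolding EM_def using int_max[of wl] by (simp add: PU)
  finally show ?thesis using EM_wl by simp
qed

lemma EM_top: "wu = ereal u \<Longrightarrow> EM F u = u"
proof -
  interpret real_distribution "interval_measure F" by (rule RD)
  assume h: "wu = ereal u"
  have "EM F u = (\<integral>w. u \<partial>interval_measure F)"
    unfolding EM_def
    by (rule integral_cong_AE) (use AE_wu h in \<open>auto elim!: eventually_mono\<close>)
  then show ?thesis by (simp add: PU)
qed

lemma EM_le_top: "wu = ereal u \<Longrightarrow> x \<le> u \<Longrightarrow> EM F x \<le> u"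
  using EM_mono EM_top by metis

lemma F_pos: "wl < y \<Longrightarrow> 0 < F y"
proof (cases "ereal y \<le> wu")
  case True
  assume "wl < y"
  then have "F wl < F y"
    using F_supp True wl_wu unfolding supp_int_def strict_mono_on_def by auto
  then show ?thesis using F_below by simp
next
  case False
  then show ?thesis using F_above by simp
qed

lemma EM_strict: "x < y \<Longrightarrow> wl < y \<Longrightarrow> EM F x < EM F y"
proof -
  interpret real_distribution "interval_measure F" by (rule RD)
  assume xy: "x < y" and wy: "wl < y"
  define y' where "y' = (max x wl + y) / 2"
  have y': "wl < y'" "x < y'" "y' < y" using xy wy unfolding y'_def by auto
  have "(\<integral>w. (y - y') * indicator {..y'} w \<partial>interval_measure F)
        \<le> (\<integral>w. max y w - max x w \<partial>interval_measure F)"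
  proof (intro integral_mono Bochner_Integration.integrable_diff int_max)
    show "integrable (interval_measure F) (\<lambda>w. (y - y') * indicator {..y'} w)"
      by (intro integrable_mult_right) (auto simp: integrable_indicator_iff less_top[symmetric])
    fix w show "(y - y') * indicator {..y'} w \<le> max y w - max x w"
      using y' xy by (auto simp: indicator_def)
  qed
  also have "\<dots> = EM F y - EM F x"
    unfolding EM_def by (intro Bochner_Integration.integral_diff int_max)
  finally have "(y - y') * F y' \<le> EM F y - EM F x"
    using Iic by simp
  moreover have "0 < (y - y') * F y'" using y' F_pos by simp
  ultimately show ?thesis by simp
qed

lemma EM_cont: "continuous_on UNIV (EM F)"
proof -
  have "dist (EM F x) (EM F y) \<le> dist x y" for x y
  proof (cases "x \<le> y")
    case True
    then show ?thesis using EM_lip[of x y] EM_mono[of x y] by (simp add: dist_real_def)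
  next
    case False
    then show ?thesis using EM_lip[of y x] EM_mono[of y x] by (simp add: dist_real_def)
  qed
  then show ?thesis
    by (intro lipschitz_on_continuous_on[where L=1] lipschitz_onI) auto
qed

lemma FP:
  fixes K k :: real
  assumes k: "0 < k" "k < 1"
    and lo: "wl < K + k * (\<integral>w. w \<partial>interval_measure F)"
    and hi: "\<And>u. wu = ereal u \<Longrightarrow> K + k * u < u"
  shows "\<exists>!x. x \<in> supp_int wl wu \<and> x = K + k * EM F x"
    and "\<And>x. x \<in> supp_int wl wu \<Longrightarrow> x = K + k * EM F x \<Longrightarrow>
           wl < x \<and> (\<forall>u. wu = ereal u \<longrightarrow> x < u)"
proof -
  define \<mu> where "\<mu> = (\<integral>w. w \<partial>interval_measure F)"
  define h where "h x = x - K - k * EM F x" for x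
  have hmono: "h x < h y" if "x < y" for x y
  proof -
    have "EM F y \<le> EM F x + (y - x)" using EM_lip that by simp
    then have "k * EM F y \<le> k * EM F x + k * (y - x)" using k
      by (metis distrib_left less_eq_real_def mult_left_mono)
    moreover have "k * (y - x) < y - x" using k that by simp
    ultimately show ?thesis unfolding h_def by simp
  qed
  have hwl: "h wl < 0" using lo EM_wl unfolding h_def \<mu>_def by simp
  have hcont: "continuous_on UNIV h" unfolding h_def
    by (intro continuous_intros continuous_on_compose2[OF EM_cont]) auto
  obtain b where b: "wl \<le> b" "ereal b \<le> wu" "0 \<le> h b"
  proof (cases wu)
    case (real u)
    have "wl \<le> u" using wl_wu real by simp
    moreover have "0 \<le> h u" using hi[OF real] EM_top[OF real] unfolding h_def by simp
    ultimately show ?thesis using that[of u] real by simp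
  next
    case PInf
    define b where "b = max wl ((K + k * (\<mu> - wl)) / (1 - k) + 1)"
    have "EM F b - b \<le> \<mu> - wl" using EM_minus[of b] unfolding b_def \<mu>_def by simp
    then have "k * (EM F b - b) \<le> k * (\<mu> - wl)" using k by (intro mult_left_mono) auto
    then have "h b \<ge> (1 - k) * b - K - k * (\<mu> - wl)" unfolding h_def
      by (simp add: algebra_simps)
    moreover have "(1 - k) * b \<ge> (1 - k) * ((K + k * (\<mu> - wl)) / (1 - k) + 1)"
      using k unfolding b_def by (intro mult_left_mono) auto
    moreover have "(1 - k) * ((K + k * (\<mu> - wl)) / (1 - k) + 1) = K + k * (\<mu> - wl) + (1 - k)"
      using k by (simp add: field_simps)
    ultimately have "0 \<le> h b" using k by simp
    then show ?thesis using that[of b] PInf unfolding b_def by simp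
  next
    case MInf then show ?thesis using wl_wu by simp
  qed
  have sol_iff: "x = K + k * EM F x \<longleftrightarrow> h x = 0" for x unfolding h_def by auto
  obtain x where x: "wl \<le> x" "x \<le> b" "h x = 0"
    using IVT'[of h wl 0 b] hwl b hcont continuous_on_subset by (metis less_imp_le subset_UNIV)
  have xs: "x \<in> supp_int wl wu" using x b unfolding supp_int_def
    by (simp add: x(1)) (metis b(2) ereal_less_eq(3) order_trans x(2))
  have uniq: "y = x" if "h y = 0" for y
    using hmono[of x y] hmono[of y x] x that by (cases x y rule: linorder_cases) auto
  show "\<exists>!x. x \<in> supp_int wl wu \<and> x = K + k * EM F x"
    using xs x uniq unfolding sol_iff by blast
  fix y assume ys: "y \<in> supp_int wl wu" and "y = K + k * EM F y"
  then have hy: "h y = 0" using sol_iff by blast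
  have "wl < y" using ys hy hwl unfolding supp_int_def by (cases "y = wl") auto
  moreover have "y < u" if u: "wu = ereal u" for u
  proof -
    have "h u > 0" using hi[OF u] EM_top[OF u] unfolding h_def by simp
    moreover have "y \<le> u" using ys u unfolding supp_int_def by simp
    ultimately show ?thesis using hy by (cases "y = u") auto
  qed
  ultimately show "wl < y \<and> (\<forall>u. wu = ereal u \<longrightarrow> y < u)" by blast
qed

end

theorem proposition2:
  fixes \<beta> z c \<delta> wl :: real and N \<Delta> :: nat and F :: "real \<Rightarrow> real" and wu :: ereal
  assumes beta: "0 < \<beta>" "\<beta> < 1"
    and zc: "0 < z" "0 < c"
    and delta: "0 < \<delta>" "\<delta> < 1"
    and N: "1 \<le> N" and Delta: "1 \<le> \<Delta>"
    and F_mono: "mono F"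
    and F_cont: "continuous_on UNIV F"
    and F_below: "\<And>x. x \<le> wl \<Longrightarrow> F x = 0"
    and F_above: "\<And>x. wu \<le> ereal x \<Longrightarrow> F x = 1"
    and F_top: "(F \<longlongrightarrow> 1) at_top"
    and F_supp: "strict_mono_on (supp_int wl wu) F"
    and wl_wu: "ereal wl < wu"
    and mean_fin: "wu = PInfty \<Longrightarrow> integrable (interval_measure F) (\<lambda>w. w)"
    and low: "wl < (1 - \<beta>) * z + \<beta> * (\<integral>w. w \<partial>interval_measure F)"
    and high: "ereal (z + c) < wu"
  shows "(\<exists>!x. x \<in> supp_int wl wu \<and>
            x = z * (1 - \<beta>) + \<beta> * \<delta> * Ups F wl wu (wR \<beta> z c F wl wu \<Delta>)
                + \<beta> * (1 - \<delta>) * Ups F wl wu x)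
       \<and> ereal (wRd \<beta> z c \<delta> \<Delta> F wl wu N) < wu
       \<and> (\<forall>n<N. wRd \<beta> z c \<delta> \<Delta> F wl wu n < wRd \<beta> z c \<delta> \<Delta> F wl wu (Suc n))
       \<and> wl < wRd \<beta> z c \<delta> \<Delta> F wl wu 0"
proof -
  interpret D: dctx F wl wu
    by unfold_locales (use F_mono F_cont F_below F_above F_top F_supp wl_wu mean_fin in auto)
  note U = D.Ups_EM
  define \<mu> where "\<mu> = (\<integral>w. w \<partial>interval_measure F)"
  define E where "E = EM F"
  define r where "r = wR \<beta> z c F wl wu"
  define d where "d = wRd \<beta> z c \<delta> \<Delta> F wl wu"
  have Emono: "x \<le> y \<Longrightarrow> E x \<le> E y" for x y using D.EM_mono unfolding E_def by blast
  have Estrict: "x < y \<Longrightarrow> wl < y \<Longrightarrow> E x < E y" for x y using D.EM_strict unfolding E_def by blast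
  have Emean: "\<mu> \<le> E x" for x using D.EM_ge_mean unfolding E_def \<mu>_def by blast
  have Etop: "wu = ereal u \<Longrightarrow> x \<le> u \<Longrightarrow> E x \<le> u" for u x using D.EM_le_top unfolding E_def by blast
  have zu: "z < u" if "wu = ereal u" for u using high zc that by simp
  have lo1: "wl < z * (1 - \<beta>) + \<beta> * (\<integral>w. w \<partial>interval_measure F)" using low by (simp add: algebra_simps)
  have hi1: "z * (1 - \<beta>) + \<beta> * u < u" if "wu = ereal u" for u
  proof -
    have "(1 - \<beta>) * z < (1 - \<beta>) * u" using zu that beta by simp
    then show ?thesis by (simp add: algebra_simps)
  qed
  have fp1: "\<exists>!x. x \<in> supp_int wl wu \<and> x = z * (1 - \<beta>) + \<beta> * EM F x"
    by (rule D.FP(1)[OF beta lo1 hi1])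
  have fp1b: "\<And>x. x \<in> supp_int wl wu \<Longrightarrow> x = z * (1 - \<beta>) + \<beta> * EM F x \<Longrightarrow>
           wl < x \<and> (\<forall>u. wu = ereal u \<longrightarrow> x < u)"
    by (rule D.FP(2)[OF beta lo1 hi1])
  have r0: "r 0 \<in> supp_int wl wu \<and> r 0 = z * (1 - \<beta>) + \<beta> * E (r 0)"
    unfolding r_def E_def wR.simps U using theI'[OF fp1] .
  have rS: "r (Suc n) = (z + c) * (1 - \<beta>) + \<beta> * E (r n)" for n
    unfolding r_def E_def wR.simps U ..
  have rtop: "r n < u" if u: "wu = ereal u" for n u
  proof (induction n)
    case 0
    then show ?case using fp1b r0 u unfolding E_def by blast
  next
    case (Suc n)
    have "E (r n) \<le> u" using Etop[OF u] Suc by simp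
    then have "\<beta> * E (r n) \<le> \<beta> * u" using beta by simp
    moreover have "(z + c) * (1 - \<beta>) < u * (1 - \<beta>)" using high u beta by simp
    ultimately show ?case unfolding rS by (simp add: algebra_simps)
  qed
  have rmono1: "r n \<le> r (Suc n)" for n
  proof (induction n)
    case 0
    have "0 \<le> c * (1 - \<beta>)" "(z + c) * (1 - \<beta>) = z * (1 - \<beta>) + c * (1 - \<beta>)"
      using zc beta by (simp_all add: algebra_simps)
    then show ?case using r0 rS[of 0] by linarith
  next
    case (Suc n)
    have "\<beta> * E (r n) \<le> \<beta> * E (r (Suc n))" using Emono[OF Suc] beta by simp
    then show ?case using rS[of "Suc n"] rS[of n] by linarith
  qed
  have rmono: "m \<le> n \<Longrightarrow> r m \<le> r n" for m n
    using rmono1 by (rule lift_Suc_mono_le)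
  have fp2: "\<exists>!x. x \<in> supp_int wl wu \<and>
      x = z * (1 - \<beta>) + \<beta> * \<delta> * E (r \<Delta>) + \<beta> * (1 - \<delta>) * EM F x"
    and fp2b: "\<And>x. x \<in> supp_int wl wu \<Longrightarrow>
      x = z * (1 - \<beta>) + \<beta> * \<delta> * E (r \<Delta>) + \<beta> * (1 - \<delta>) * EM F x \<Longrightarrow>
           wl < x \<and> (\<forall>u. wu = ereal u \<longrightarrow> x < u)"
  proof -
    have k: "0 < \<beta> * (1 - \<delta>)" "\<beta> * (1 - \<delta>) < 1" using beta delta
      by (simp_all add: mult_pos_pos) (smt (verit) mult_less_cancel_left2)
    have lo: "wl < z * (1 - \<beta>) + \<beta> * \<delta> * E (r \<Delta>) + \<beta> * (1 - \<delta>) * \<mu>"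
    proof -
      have "\<beta> * \<delta> * \<mu> \<le> \<beta> * \<delta> * E (r \<Delta>)" using Emean beta delta by simp
      then show ?thesis using low unfolding \<mu>_def by (simp add: algebra_simps)
    qed
    have hi: "z * (1 - \<beta>) + \<beta> * \<delta> * E (r \<Delta>) + \<beta> * (1 - \<delta>) * u < u" if u: "wu = ereal u" for u
    proof -
      have "E (r \<Delta>) \<le> u" using Etop[OF u] rtop[OF u] less_imp_le by blast
      then have "\<beta> * \<delta> * E (r \<Delta>) \<le> \<beta> * \<delta> * u" using beta delta by simp
      moreover have "(1 - \<beta>) * z < (1 - \<beta>) * u" using zu[OF u] beta by simp
      ultimately show ?thesis by (simp add: algebra_simps)
    qed
    show "\<exists>!x. x \<in> supp_int wl wu \<and>
      x = z * (1 - \<beta>) + \<beta> * \<delta> * E (r \<Delta>) + \<beta> * (1 - \<delta>) * EM F x"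
      by (rule D.FP(1)[OF k]) (use lo hi \<mu>_def in auto)
    show "\<And>x. x \<in> supp_int wl wu \<Longrightarrow>
      x = z * (1 - \<beta>) + \<beta> * \<delta> * E (r \<Delta>) + \<beta> * (1 - \<delta>) * EM F x \<Longrightarrow>
           wl < x \<and> (\<forall>u. wu = ereal u \<longrightarrow> x < u)"
      by (rule D.FP(2)[OF k]) (use lo hi \<mu>_def in auto)
  qed
  have d0: "d 0 \<in> supp_int wl wu \<and> d 0 = z * (1 - \<beta>) + \<beta> * \<delta> * E (r \<Delta>) + \<beta> * (1 - \<delta>) * E (d 0)"
    unfolding d_def wRd.simps U using theI'[OF fp2] unfolding r_def E_def .
  have d0b: "wl < d 0 \<and> (\<forall>u. wu = ereal u \<longrightarrow> d 0 < u)"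
    using fp2b d0 unfolding E_def by blast
  have dS: "d (Suc n) = (z + c) * (1 - \<beta>) + \<beta> * \<delta> * E (r (n + \<Delta>)) + \<beta> * (1 - \<delta>) * E (d n)" for n
    unfolding d_def r_def E_def wRd.simps U ..
  have dinc: "wl < d n \<and> d n < d (Suc n)" for n
  proof (induction n)
    case 0
    have "0 < c * (1 - \<beta>)" "(z + c) * (1 - \<beta>) = z * (1 - \<beta>) + c * (1 - \<beta>)"
      using zc beta by (simp_all add: algebra_simps)
    then show ?case using d0 d0b dS[of 0] by simp
  next
    case (Suc n)
    have "wl < d (Suc n)" using Suc by simp
    then have "E (d n) < E (d (Suc n))" using Estrict Suc by blast
    then have a: "\<beta> * (1 - \<delta>) * E (d n) < \<beta> * (1 - \<delta>) * E (d (Suc n))" using beta delta by simp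
    have "E (r (n + \<Delta>)) \<le> E (r (Suc n + \<Delta>))" using Emono rmono by simp
    then have b: "\<beta> * \<delta> * E (r (n + \<Delta>)) \<le> \<beta> * \<delta> * E (r (Suc n + \<Delta>))" using beta delta by simp
    show ?case using a b \<open>wl < d (Suc n)\<close> unfolding dS[of "Suc n"] dS[of n] by simp
  qed
  have dtop: "d n < u" if u: "wu = ereal u" for n u
  proof (induction n)
    case 0
    then show ?case using d0b u by simp
  next
    case (Suc n)
    have "r (n + \<Delta>) < u" using rtop[OF u] .
    then have "E (r (n + \<Delta>)) \<le> u" using Etop[OF u] by simp
    then have a: "\<beta> * \<delta> * E (r (n + \<Delta>)) \<le> \<beta> * \<delta> * u" using beta delta by simp
    have "E (d n) \<le> u" using Etop[OF u] Suc by simp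
    then have b: "\<beta> * (1 - \<delta>) * E (d n) \<le> \<beta> * (1 - \<delta>) * u" using beta delta by simp
    have "(z + c) * (1 - \<beta>) < u * (1 - \<beta>)" using high u beta by simp
    then show ?case unfolding dS using a b by (simp add: algebra_simps)
  qed
  have top: "ereal (d N) < wu"
  proof (cases wu)
    case (real u) then show ?thesis using dtop by simp
  qed (use wl_wu in auto)
  show ?thesis
    using fp2 top dinc d0b unfolding U E_def[symmetric] r_def[symmetric] d_def[symmetric] by blast
qed

end
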